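(* Let $m\ge n$, $B\in\mathbb R^{n\times m}$ of full row rank, $f,h$ convex and continuously differentiable with Lipschitz gradients, $\mathcal L(u,p)=f(u)-h(p)+(Bu,p)$ with saddle point $(u^*,p^* )$, and $\mathcal I_{\mathcal V},\mathcal I_{\mathcal Q}$ symmetric positive definite. Suppose $f\in\mathcal S^{1,1}_{\mu_{f,\mathcal I_{\mathcal V}},L_{f,\mathcal I_{\mathcal V}}}$ w.r.t. $\mathcal I_{\mathcal V}$ with $0<\mu_{f,\mathcal I_{\mathcal V}}\le L_{f,\mathcal I_{\mathcal V}}<2$. Let $(u_k,p_k)$ be generated from $(u_0,p_0)$ by the implicit-explicit (IMEX) scheme $$u_{k+1/2}=u_k-\mathcal I_{\mathcal V}^{-1}(\nabla f(u_k)+B^\top p_k),\qquad p_{k+1}=p_k-\alpha_k\mathcal I_{\mathcal Q}^{-1}(\nabla h(p_k)-Bu_{k+1/2}),$$ $$u_{k+1}=\arg\min_{u\in\mathbb R^m} f(u)+\frac1{2\alpha_k}\|u-u_k+\alpha_k\mathcal I_{\mathcal V}^{-1}B^\top p_{k+1}\|^2_{\mathcal I_{\mathcal V}}.$$ Then for $0<\alpha_k<\mu_{\mathcal Q}/L_{S,\mathcal Q}^2$, $$\mathcal E(u_{k+1},p_{k+1})\le\frac{1}{1+\alpha_k\mu_k}\mathcal E(u_k,p_k),\qquad \mu_k=\min\{\mu_{\mathcal V},\ \mu_{\mathcal Q}-\alpha_kL_{S,\mathcal Q}^2\}.$$ In particular, for $\alpha_k=0.5\mu_{\mathcal Q}/L_{S,\mathcal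 Q}^2$, $$\mathcal E(u_{k+1},p_{k+1})\le\frac{1}{1+0.5\,\mu_{\mathcal Q}\min\{\mu_{\mathcal V},\mu_{\mathcal Q}/2\}/L_{S,\mathcal Q}^2}\mathcal E(u_k,p_k).$$
   Context: For SPD $M$, $\|x\|_M=(Mx,x)^{1/2}$; $D_g(y,x)=g(y)-g(x)-(\nabla g(x),y-x)$; $g\in\mathcal S^{1,1}_{\mu_{g,M},L_{g,M}}$ w.r.t. $M$ means $\frac{\mu_{g,M}}2\|x-y\|_M^2\le D_g(y,x)\le\frac{L_{g,M}}2\|x-y\|_M^2$ for all $x,y$. A saddle point satisfies $\nabla f(u^* )+B^\top p^*=0$, $Bu^*=\nabla h(p^* )$. Define $e(u)=u-\mathcal I_{\mathcal V}^{-1}\nabla f(u)$, $h_B(p)=h(p)+\frac12(B\mathcal I_{\mathcal V}^{-1}B^\top p,p)$, $\mathcal E(u,p)=\frac12\|u-u^*\|^2_{\mathcal I_{\mathcal V}}+\frac12\|p-p^*\|^2_{\mathcal I_{\mathcal Q}}$. Let $L_{e,\mathcal I_{\mathcal V}}$ be the Lipschitz constant of $e$ in $\|\cdot\|_{\mathcal I_{\mathcal V}}$, $\mu_{h_B,\mathcal I_{\mathcal Q}},L_{h_B,\mathcal I_{\mathcal Q}}$ the convexity and smoothness constants of $h_B$ w.r.t. $\mathcal I_{\mathcal Q}$, $L_S^2=\lambda_{\max}(\mathcal I_{\mathcal Q}^{-1}B\mathcal I_{\mathcal V}^{-1}B^\top)$. Constants: $\mu_{\mathcal V}=\mu_{f,\mathcal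 I_{\mathcal V}}$, $\mu_{\mathcal Q}=(2-L_{f,\mathcal I_{\mathcal V}})\mu_{h_B,\mathcal I_{\mathcal Q}}$, $L_{S,\mathcal Q}^2=L_{h_B,\mathcal I_{\mathcal Q}}^2+L_{e,\mathcal I_{\mathcal V}}^2L_S^2$. *)

theory Defs
  imports "HOL-Analysis.Analysis"
begin

definition mnorm2 :: "real^'a^'a \<Rightarrow> real^'a \<Rightarrow> real" where
  "mnorm2 M x = (M *v x) \<bullet> x"

definition mnorm :: "real^'a^'a \<Rightarrow> real^'a \<Rightarrow> real" where
  "mnorm M x = sqrt (mnorm2 M x)"

definition spd :: "real^'a^'a \<Rightarrow> bool" where
  "spd M \<longleftrightarrow> transpose M = M \<and> (\<forall>x. x \<noteq> 0 \<longrightarrow> mnorm2 M x > 0)"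

definition bregman :: "(real^'a \<Rightarrow> real) \<Rightarrow> (real^'a \<Rightarrow> real^'a) \<Rightarrow> real^'a \<Rightarrow> real^'a \<Rightarrow> real" where
  "bregman g dg y x = g y - g x - dg x \<bullet> (y - x)"

definition S11 :: "(real^'a \<Rightarrow> real) \<Rightarrow> (real^'a \<Rightarrow> real^'a) \<Rightarrow> real \<Rightarrow> real \<Rightarrow> real^'a^'a \<Rightarrow> bool" where
  "S11 g dg mu L M \<longleftrightarrow> (\<forall>x y. mu / 2 * mnorm2 M (x - y) \<le> bregman g dg y x
                                \<and> bregman g dg y x \<le> L / 2 * mnorm2 M (x - y))"

definition is_gradient :: "(real^'a \<Rightarrow> real) \<Rightarrow> (real^'a \<Rightarrow> real^'a) \<Rightarrow> bool" where
  "is_gradient g dg \<longleftrightarrow> (\<forall>x. (g has_derivative (\<lambda>v. dg x \<bullet> v)) (at x))"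

definition lipschitz_grad :: "(real^'a \<Rightarrow> real^'a) \<Rightarrow> bool" where
  "lipschitz_grad dg \<longleftrightarrow> (\<exists>L. \<forall>x y. norm (dg x - dg y) \<le> L * norm (x - y))"

definition lambda_max :: "real^'a^'a \<Rightarrow> real" where
  "lambda_max A = Max {c. \<exists>v. v \<noteq> 0 \<and> A *v v = c *\<^sub>R v}"

end

theory Submission
  imports Defs
begin

lemma dot_mv: "((A::real^'n^'m) *v x) \<bullet> y = x \<bullet> (transpose A *v y)"
  by (metis dot_lmul_matrix inner_commute transpose_matrix_vector)

lemma spd_sym: "spd M \<Longrightarrow> (M *v x) \<bullet> y = x \<bullet> (M *v y)"
  unfolding spd_def by (metis dot_mv)

lemma spd_nonneg: "spd M \<Longrightarrow> 0 \<le> (M *v x) \<bullet> x"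
  unfolding spd_def mnorm2_def by (cases "x = 0") (auto intro: less_imp_le)

lemma spd_pos: "spd M \<Longrightarrow> x \<noteq> 0 \<Longrightarrow> 0 < (M *v x) \<bullet> x"
  unfolding spd_def mnorm2_def by auto

lemma spd_invertible: assumes "spd M" shows "invertible M"
proof -
  have "\<forall>x. M *v x = 0 \<longrightarrow> x = 0" using spd_pos[OF assms] by fastforce
  then show ?thesis using matrix_left_invertible_ker invertible_left_inverse by blast
qed

lemma matrix_inv_props: assumes "invertible (M::real^'n^'n)"
  shows "M ** matrix_inv M = mat 1" "matrix_inv M ** M = mat 1"
proof -
  have "\<exists>A'. M ** A' = mat 1 \<and> A' ** M = mat 1" using assms invertible_def by blast
  from someI_ex[OF this] show "M ** matrix_inv M = mat 1" "matrix_inv M ** M = mat 1"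
    unfolding matrix_inv_def by auto
qed

lemma spd_inv_mv: assumes "spd M"
  shows "M *v (matrix_inv M *v z) = z" "matrix_inv M *v (M *v z) = z"
  using matrix_inv_props[OF spd_invertible[OF assms]]
  by (simp_all add: matrix_vector_mul_assoc)

lemma spd_inv_transpose: assumes "spd M" shows "transpose (matrix_inv M) = matrix_inv M"
proof -
  note p = matrix_inv_props[OF spd_invertible[OF assms]]
  have T: "transpose M = M" using assms spd_def by auto
  have "transpose (matrix_inv M) ** M = mat 1"
    using p(1) T by (metis matrix_transpose_mul transpose_mat)
  then have "transpose (matrix_inv M) = transpose (matrix_inv M) ** (M ** matrix_inv M)"
    using p by simp
  also have "\<dots> = matrix_inv M" using \<open>transpose (matrix_inv M) ** M = mat 1\<close>
    by (simp add: matrix_mul_assoc)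
  finally show ?thesis .
qed

lemma spd_inv_spd: assumes "spd M" shows "spd (matrix_inv M)"
proof -
  have "0 < mnorm2 (matrix_inv M) x" if "x \<noteq> 0" for x
  proof -
    have ne: "matrix_inv M *v x \<noteq> 0" using spd_inv_mv(1)[OF assms, of x] that by auto
    have "mnorm2 (matrix_inv M) x = (matrix_inv M *v x) \<bullet> (M *v (matrix_inv M *v x))"
      unfolding mnorm2_def using spd_inv_mv(1)[OF assms, of x] by simp
    also have "\<dots> > 0" using spd_pos[OF assms ne] by (simp add: inner_commute)
    finally show ?thesis .
  qed
  then show ?thesis unfolding spd_def using spd_inv_transpose[OF assms] by auto
qed

lemma spd_young: assumes "spd M" "c > 0"
  shows "(M *v x) \<bullet> y \<le> ((M *v x) \<bullet> x) / (2*c) + c/2 * ((M *v y) \<bullet> y)"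
proof -
  have "0 \<le> (M *v (x - c *\<^sub>R y)) \<bullet> (x - c *\<^sub>R y)" by (rule spd_nonneg[OF assms(1)])
  also have "\<dots> = (M *v x) \<bullet> x - 2*c * ((M *v x) \<bullet> y) + c^2 * ((M *v y) \<bullet> y)"
    using spd_sym[OF assms(1), of y x]
    by (simp add: algebra_simps inner_diff_left inner_diff_right power2_eq_square inner_commute)
  finally have "2*c * ((M *v x) \<bullet> y) \<le> (M *v x) \<bullet> x + c^2 * ((M *v y) \<bullet> y)" by simp
  then show ?thesis using assms(2) by (simp add: field_simps power2_eq_square)
qed

lemma mnorm2_neg: "mnorm2 M (x - y) = mnorm2 M (y - x)"
proof -
  have "M *v (x - y) = - (M *v (y - x))" by (simp add: matrix_vector_mult_diff_distrib)
  moreover have "x - y = - (y - x)" by simp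
  ultimately have "(M *v (x - y)) \<bullet> (x - y) = (- (M *v (y - x))) \<bullet> (- (y - x))" by metis
  then show ?thesis unfolding mnorm2_def by (simp only: inner_minus_left inner_minus_right minus_minus)
qed

lemma bregman_sum: "bregman g dg y x + bregman g dg x y = (dg y - dg x) \<bullet> (y - x)"
  unfolding bregman_def by (simp add: algebra_simps inner_diff_left inner_diff_right)

lemma S11_mono: assumes "S11 g dg mu L M"
  shows "mu * mnorm2 M (y - x) \<le> (dg y - dg x) \<bullet> (y - x)"
proof -
  have "mu/2 * mnorm2 M (x - y) \<le> bregman g dg y x" "mu/2 * mnorm2 M (y - x) \<le> bregman g dg x y"
    using assms unfolding S11_def by blast+
  moreover have "mu * mnorm2 M (y - x) = mu/2 * mnorm2 M (x - y) + mu/2 * mnorm2 M (y - x)"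
    using mnorm2_neg[of M x y] by simp
  ultimately show ?thesis using bregman_sum[of g dg y x] by linarith
qed

lemma S11_breg_lower: assumes "S11 g dg mu L M" "spd M" "0 \<le> mu" "0 < L"
  shows "1/(2*L) * ((matrix_inv M *v (dg y - dg x)) \<bullet> (dg y - dg x)) \<le> bregman g dg y x"
proof -
  define r where "r = dg y - dg x"
  define Mi where "Mi = matrix_inv M"
  define z where "z = y - (1/L) *\<^sub>R (Mi *v r)"
  have lo: "0 \<le> bregman g dg z x"
    using assms(1,3) spd_nonneg[OF assms(2)] unfolding S11_def mnorm2_def
    by (meson mult_nonneg_nonneg order_trans zero_le_divide_iff zero_le_numeral)
  have up: "bregman g dg z y \<le> L/2 * mnorm2 M (y - z)" using assms(1) unfolding S11_def by blast
  have yz: "y - z = (1/L) *\<^sub>R (Mi *v r)" unfolding z_def by simp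
  have "mnorm2 M (y - z) = (1/L)^2 * ((M *v (Mi *v r)) \<bullet> (Mi *v r))"
    unfolding yz mnorm2_def by (simp add: matrix_vector_mult_scaleR power2_eq_square)
  also have "\<dots> = (1/L)^2 * ((Mi *v r) \<bullet> r)"
    using spd_inv_mv(1)[OF assms(2), of r] unfolding Mi_def by (simp add: inner_commute)
  finally have n2: "mnorm2 M (y - z) = (1/L)^2 * ((Mi *v r) \<bullet> r)" .
  have zy: "z - y = - ((1/L) *\<^sub>R (Mi *v r))" unfolding z_def by simp
  have "bregman g dg z x = bregman g dg y x + bregman g dg z y + r \<bullet> (z - y)"
    unfolding bregman_def r_def by (simp add: algebra_simps inner_diff_left inner_diff_right)
  also have "r \<bullet> (z - y) = - (1/L) * ((Mi *v r) \<bullet> r)"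
    unfolding zy by (simp add: inner_commute)
  finally have "0 \<le> bregman g dg y x + L/2 * ((1/L)^2 * ((Mi *v r) \<bullet> r)) + (- (1/L) * ((Mi *v r) \<bullet> r))"
    using lo up[unfolded n2] by linarith
  moreover have "L/2 * ((1/L)^2 * ((Mi *v r) \<bullet> r)) + (- (1/L) * ((Mi *v r) \<bullet> r)) = - (1/(2*L) * ((Mi *v r) \<bullet> r))"
    using assms(4) by (simp add: field_simps power2_eq_square)
  ultimately have "1/(2*L) * ((Mi *v r) \<bullet> r) \<le> bregman g dg y x" by linarith
  then show ?thesis by (simp add: Mi_def r_def)
qed

lemma S11_cocoercive: assumes "S11 g dg mu L M" "spd M" "0 \<le> mu" "0 < L"
  shows "1/L * ((matrix_inv M *v (dg y - dg x)) \<bullet> (dg y - dg x)) \<le> (dg y - dg x) \<bullet> (y - x)"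
proof -
  have a: "1/(2*L) * ((matrix_inv M *v (dg y - dg x)) \<bullet> (dg y - dg x)) \<le> bregman g dg y x"
    by (rule S11_breg_lower[OF assms])
  have b: "1/(2*L) * ((matrix_inv M *v (dg x - dg y)) \<bullet> (dg x - dg y)) \<le> bregman g dg x y"
    by (rule S11_breg_lower[OF assms])
  have c: "(matrix_inv M *v (dg x - dg y)) \<bullet> (dg x - dg y) = (matrix_inv M *v (dg y - dg x)) \<bullet> (dg y - dg x)"
  proof -
    have "matrix_inv M *v (dg x - dg y) = - (matrix_inv M *v (dg y - dg x))" by (simp add: matrix_vector_mult_diff_distrib)
    moreover have "dg x - dg y = - (dg y - dg x)" by simp
    ultimately show ?thesis by (metis inner_minus_left inner_minus_right minus_minus)
  qed
  have d: "1/L * ((matrix_inv M *v (dg y - dg x)) \<bullet> (dg y - dg x)) = 1/(2*L) * ((matrix_inv M *v (dg y - dg x)) \<bullet> (dg y - dg x)) + 1/(2*L) * ((matrix_inv M *v (dg y - dg x)) \<bullet> (dg y - dg x))"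
    by (simp add: field_simps)
  show ?thesis using a b[unfolded c] d bregman_sum[of g dg y x] by linarith
qed

lemma S11_lip: assumes "S11 g dg mu L M" "spd M" "0 \<le> mu" "0 < L"
  shows "(matrix_inv M *v (dg y - dg x)) \<bullet> (dg y - dg x) \<le> L^2 * mnorm2 M (y - x)"
proof -
  define r where "r = dg y - dg x"
  define Mi where "Mi = matrix_inv M"
  have spdi: "spd Mi" unfolding Mi_def by (rule spd_inv_spd[OF assms(2)])
  have co: "1/L * ((Mi *v r) \<bullet> r) \<le> r \<bullet> (y - x)" using S11_cocoercive[OF assms] unfolding Mi_def r_def .
  have "r \<bullet> (y - x) = (Mi *v r) \<bullet> (M *v (y - x))"
    using spd_sym[OF spdi, of r "M *v (y - x)"] spd_inv_mv(2)[OF assms(2), of "y-x"] unfolding Mi_def by simp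
  also have "\<dots> \<le> ((Mi *v r) \<bullet> r) / (2*L) + L/2 * ((Mi *v (M *v (y - x))) \<bullet> (M *v (y - x)))"
    by (rule spd_young[OF spdi assms(4)])
  also have "(Mi *v (M *v (y - x))) \<bullet> (M *v (y - x)) = mnorm2 M (y - x)"
    using spd_inv_mv(2)[OF assms(2), of "y-x"] unfolding Mi_def mnorm2_def by (simp add: inner_commute)
  finally have "1/L * ((Mi *v r) \<bullet> r) \<le> ((Mi *v r) \<bullet> r) / (2*L) + L/2 * mnorm2 M (y - x)" using co by linarith
  moreover have "1/L * ((Mi *v r) \<bullet> r) = ((Mi *v r) \<bullet> r) / (2*L) + ((Mi *v r) \<bullet> r) / (2*L)" by simp
  ultimately have "((Mi *v r) \<bullet> r) / (2*L) \<le> L/2 * mnorm2 M (y - x)" by linarith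
  then have "((Mi *v r) \<bullet> r) / (2*L) * (2*L) \<le> L/2 * mnorm2 M (y - x) * (2*L)"
    using assms(4) by (intro mult_right_mono) auto
  then have "((Mi *v r) \<bullet> r) \<le> L^2 * mnorm2 M (y - x)"
    using assms(4) by (simp add: power2_eq_square algebra_simps)
  then show ?thesis unfolding Mi_def r_def .
qed

lemma quad_lemma:
  fixes X c :: real
  assumes "X > 0" shows "\<exists>t. 2*t*X + t^2*c > 0"
proof -
  define t where "t = X / (\<bar>c\<bar> + 1)"
  have t0: "t > 0" unfolding t_def using assms by simp
  have "t * \<bar>c\<bar> < X" unfolding t_def using assms
    by (simp add: field_simps)
  then have "t^2 * \<bar>c\<bar> < t * X" using t0 by (simp add: power2_eq_square)
  moreover have "t^2 * c \<ge> - (t^2 * \<bar>c\<bar>)" using mult_left_mono[of "-\<bar>c\<bar>" c "t^2"] by simp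
  moreover have "t * X > 0" using t0 assms by simp
  ultimately show ?thesis by (intro exI[of _ t]) linarith
qed

lemma eig_finite:
  fixes Q S :: "real^'n^'n"
  assumes Q: "spd Q" and S: "transpose S = S"
  shows "finite {c. \<exists>v. v \<noteq> 0 \<and> (matrix_inv Q ** S) *v v = c *\<^sub>R v}"
proof -
  define Ev where "Ev = {c. \<exists>v. v \<noteq> 0 \<and> (matrix_inv Q ** S) *v v = c *\<^sub>R v}"
  define w where "w c = (SOME v. v \<noteq> 0 \<and> (matrix_inv Q ** S) *v v = c *\<^sub>R v)" for c
  have w: "w c \<noteq> 0 \<and> (matrix_inv Q ** S) *v (w c) = c *\<^sub>R w c" if "c \<in> Ev" for c
    using someI_ex[of "\<lambda>v. v \<noteq> 0 \<and> (matrix_inv Q ** S) *v v = c *\<^sub>R v"] that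
    unfolding w_def Ev_def by blast
  have Sw: "S *v w c = c *\<^sub>R (Q *v w c)" if "c \<in> Ev" for c
  proof -
    have "S *v w c = Q *v ((matrix_inv Q ** S) *v w c)"
      by (simp add: spd_inv_mv(1)[OF Q] flip: matrix_vector_mul_assoc)
    then show ?thesis using w[OF that] by (simp add: matrix_vector_mult_scaleR)
  qed
  have orth: "(Q *v w c) \<bullet> w d = 0" if "c \<in> Ev" "d \<in> Ev" "c \<noteq> d" for c d
  proof -
    have "(S *v w c) \<bullet> w d = w c \<bullet> (S *v w d)" using S by (metis dot_mv)
    then have "c * ((Q *v w c) \<bullet> w d) = d * (w c \<bullet> (Q *v w d))"
      using Sw[OF that(1)] Sw[OF that(2)] by simp
    moreover have "w c \<bullet> (Q *v w d) = (Q *v w c) \<bullet> w d" using spd_sym[OF Q] by metis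
    ultimately have "(c - d) * ((Q *v w c) \<bullet> w d) = 0" by (simp add: algebra_simps)
    then show ?thesis using that(3) by simp
  qed
  have inj: "inj_on w Ev"
  proof (rule inj_onI)
    fix c d assume "c \<in> Ev" "d \<in> Ev" "w c = w d"
    then have "c *\<^sub>R w c = d *\<^sub>R w c" using w by metis
    then show "c = d" using w[OF \<open>c \<in> Ev\<close>] by simp
  qed
  have ind: "independent (w ` Ev)"
    unfolding real_vector.independent_explicit_finite_subsets
  proof (intro allI impI ballI)
    fix T u v assume T: "T \<subseteq> w ` Ev" "finite T" and sum: "(\<Sum>v\<in>T. u v *\<^sub>R v) = 0" and v: "v \<in> T"
    obtain c where c: "c \<in> Ev" "v = w c" using T v by blast
    have "0 = (Q *v v) \<bullet> (\<Sum>x\<in>T. u x *\<^sub>R x)" using sum by simp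
    also have "\<dots> = (\<Sum>x\<in>T. u x * ((Q *v v) \<bullet> x))" by (simp add: inner_sum_right)
    also have "\<dots> = u v * ((Q *v v) \<bullet> v) + (\<Sum>x\<in>T - {v}. u x * ((Q *v v) \<bullet> x))"
      using sum.remove[OF T(2) v] by blast
    also have "(\<Sum>x\<in>T - {v}. u x * ((Q *v v) \<bullet> x)) = 0"
    proof (rule sum.neutral, rule ballI)
      fix x assume x: "x \<in> T - {v}"
      then obtain d where d: "d \<in> Ev" "x = w d" using T by blast
      then have "c \<noteq> d" using x c by auto
      then show "u x * ((Q *v v) \<bullet> x) = 0" using orth[OF c(1) d(1)] c d by simp
    qed
    finally have "u v * ((Q *v v) \<bullet> v) = 0" by simp
    moreover have "(Q *v v) \<bullet> v > 0" using spd_pos[OF Q] w[OF c(1)] c(2) by blast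
    ultimately show "u v = 0" by simp
  qed
  have "finite (w ` Ev)" using independent_bound[OF ind] by blast
  then show ?thesis using finite_imageD[OF _ inj] unfolding Ev_def by blast
qed

lemma lambda_max_bound:
  fixes Q S :: "real^'n^'n"
  assumes Q: "spd Q" and S: "transpose S = S"
  shows "(S *v q) \<bullet> q \<le> lambda_max (matrix_inv Q ** S) * ((Q *v q) \<bullet> q)"
proof -
  define R where "R x = ((S *v x) \<bullet> x) / ((Q *v x) \<bullet> x)" for x
  have c1: "continuous_on (sphere 0 1) (\<lambda>x. (S *v x) \<bullet> x)" by (intro continuous_intros)
  have c2: "continuous_on (sphere 0 1) (\<lambda>x. (Q *v x) \<bullet> x)" by (intro continuous_intros)
  have nz: "\<forall>x\<in>sphere 0 1. (Q *v x) \<bullet> x \<noteq> 0"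
  proof
    fix x :: "real^'n" assume "x \<in> sphere 0 1"
    then have "x \<noteq> 0" by auto
    then show "(Q *v x) \<bullet> x \<noteq> 0" using spd_pos[OF Q] by (metis less_irrefl)
  qed
  have cont: "continuous_on (sphere 0 1) R"
    unfolding R_def using continuous_on_divide[OF c1 c2] nz by blast
  obtain q0 where q0: "q0 \<in> sphere (0::real^'n) 1" "\<forall>y\<in>sphere 0 1. R y \<le> R q0"
    using continuous_attains_sup[OF compact_sphere _ cont] by fastforce
  define l where "l = R q0"
  have q0ne: "q0 \<noteq> 0" using q0 by auto
  have bound: "(S *v x) \<bullet> x \<le> l * ((Q *v x) \<bullet> x)" for x
  proof (cases "x = 0")
    case True then show ?thesis by simp
  next
    case False
    define y where "y = (1 / norm x) *\<^sub>R x"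
    have ys: "y \<in> sphere 0 1" using False unfolding y_def by simp
    have "R y = R x" unfolding R_def y_def using False
      by (simp add: matrix_vector_mult_scaleR field_simps power2_eq_square)
    then have "R x \<le> l" using q0 ys unfolding l_def by metis
    moreover have "(Q *v x) \<bullet> x > 0" using spd_pos[OF Q False] .
    ultimately show ?thesis unfolding R_def by (simp add: divide_le_eq)
  qed
  have eq0: "(S *v q0) \<bullet> q0 = l * ((Q *v q0) \<bullet> q0)"
    unfolding l_def R_def using spd_pos[OF Q q0ne] by simp
  define M where "M = S - l *\<^sub>R Q"
  have Msym: "(M *v x) \<bullet> y = x \<bullet> (M *v y)" for x y
  proof -
    have "transpose M = M" unfolding M_def using S Q unfolding spd_def
      by (simp add: transpose_def vec_eq_iff)
    then show ?thesis by (metis dot_mv)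
  qed
  have Mv: "M *v x = S *v x - l *\<^sub>R (Q *v x)" for x
    unfolding M_def by (simp add: matrix_vector_mult_diff_rdistrib scaleR_matrix_vector_assoc)
  have phi: "(M *v x) \<bullet> x \<le> 0" for x using bound[of x] unfolding Mv by (simp add: inner_diff_left)
  have phi0: "(M *v q0) \<bullet> q0 = 0" using eq0 unfolding Mv by (simp add: inner_diff_left)
  define d where "d = M *v q0"
  have "d = 0"
  proof (rule ccontr)
    assume "d \<noteq> 0"
    then have X: "d \<bullet> d > 0" by simp
    obtain t where t: "2*t*(d \<bullet> d) + t^2*((M *v d) \<bullet> d) > 0" using quad_lemma[OF X] by blast
    have "(M *v (q0 + t *\<^sub>R d)) \<bullet> (q0 + t *\<^sub>R d)
          = (M *v q0) \<bullet> q0 + t * ((M *v q0) \<bullet> d) + t * ((M *v d) \<bullet> q0) + t^2 * ((M *v d) \<bullet> d)"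
      by (simp add: matrix_vector_right_distrib matrix_vector_mult_scaleR inner_add_left inner_add_right power2_eq_square algebra_simps)
    also have "(M *v d) \<bullet> q0 = d \<bullet> d" using Msym[of d q0] unfolding d_def by (simp add: inner_commute)
    also have "(M *v q0) \<bullet> d = d \<bullet> d" unfolding d_def ..
    finally have "(M *v (q0 + t *\<^sub>R d)) \<bullet> (q0 + t *\<^sub>R d) = 2*t*(d \<bullet> d) + t^2*((M *v d) \<bullet> d)"
      using phi0 by simp
    then show False using t phi[of "q0 + t *\<^sub>R d"] by linarith
  qed
  then have Sq0: "S *v q0 = l *\<^sub>R (Q *v q0)" unfolding d_def Mv by simp
  have eig: "(matrix_inv Q ** S) *v q0 = l *\<^sub>R q0"
    by (simp add: Sq0 matrix_vector_mult_scaleR spd_inv_mv(2)[OF Q] flip: matrix_vector_mul_assoc)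
  have "lambda_max (matrix_inv Q ** S) = l"
    unfolding lambda_max_def
  proof (rule Max_eqI)
    show "finite {c. \<exists>v. v \<noteq> 0 \<and> (matrix_inv Q ** S) *v v = c *\<^sub>R v}" by (rule eig_finite[OF Q S])
    show "l \<in> {c. \<exists>v. v \<noteq> 0 \<and> (matrix_inv Q ** S) *v v = c *\<^sub>R v}" using eig q0ne by blast
    fix c assume "c \<in> {c. \<exists>v. v \<noteq> 0 \<and> (matrix_inv Q ** S) *v v = c *\<^sub>R v}"
    then obtain v where v: "v \<noteq> 0" "(matrix_inv Q ** S) *v v = c *\<^sub>R v" by blast
    have "S *v v = Q *v ((matrix_inv Q ** S) *v v)"
      by (simp add: spd_inv_mv(1)[OF Q] flip: matrix_vector_mul_assoc)
    then have "S *v v = c *\<^sub>R (Q *v v)" using v by (simp add: matrix_vector_mult_scaleR)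
    then have "c * ((Q *v v) \<bullet> v) \<le> l * ((Q *v v) \<bullet> v)" using bound[of v] by simp
    then show "c \<le> l" using spd_pos[OF Q v(1)] by simp
  qed
  then show ?thesis using bound by simp
qed

lemma quad_deriv:
  fixes V :: "real^'m^'m"
  shows "((\<lambda>v. (V *v (v - w)) \<bullet> (v - w)) has_derivative
   (\<lambda>h. (V *v h) \<bullet> (x - w) + (V *v (x - w)) \<bullet> h)) (at x)"
proof -
  have r: "((\<lambda>v. v - w) has_derivative (\<lambda>h. h)) (at x)" by (auto intro!: derivative_eq_intros)
  have l: "((\<lambda>v. V *v (v - w)) has_derivative (\<lambda>h. V *v h)) (at x)"
    using bounded_linear.has_derivative[OF matrix_vector_mul_bounded_linear[of V] r] by simp
  show ?thesis using has_derivative_inner[OF l r] by (simp add: inner_commute add.commute)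
qed

lemma argmin_foc:
  fixes V :: "real^'m^'m"
  assumes grad: "is_gradient f gf" and V: "spd V" and a: "a > 0"
    and min: "\<forall>v. f u1 + 1/(2*a) * mnorm2 V (u1 - w) \<le> f v + 1/(2*a) * mnorm2 V (v - w)"
  shows "gf u1 + (1/a) *\<^sub>R (V *v (u1 - w)) = 0"
proof -
  define g where "g = gf u1 + (1/a) *\<^sub>R (V *v (u1 - w))"
  have d: "((\<lambda>v. f v + 1/(2*a) * ((V *v (v - w)) \<bullet> (v - w))) has_derivative
      (\<lambda>h. gf u1 \<bullet> h + 1/(2*a) * ((V *v h) \<bullet> (u1 - w) + (V *v (u1 - w)) \<bullet> h))) (at u1)"
    using has_derivative_add[OF grad[unfolded is_gradient_def, rule_format, of u1]
        has_derivative_mult_right[OF quad_deriv[of V w u1], of "1/(2*a)"]] by simp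
  have "(\<lambda>h. gf u1 \<bullet> h + 1/(2*a) * ((V *v h) \<bullet> (u1 - w) + (V *v (u1 - w)) \<bullet> h)) = (\<lambda>v. 0)"
    by (rule differential_zero_maxmin[OF _ open_UNIV d]) (use min in \<open>auto simp: mnorm2_def\<close>)
  then have "gf u1 \<bullet> g + 1/(2*a) * ((V *v g) \<bullet> (u1 - w) + (V *v (u1 - w)) \<bullet> g) = 0" by metis
  moreover have "(V *v g) \<bullet> (u1 - w) = (V *v (u1 - w)) \<bullet> g" using spd_sym[OF V] by (metis inner_commute)
  ultimately have "gf u1 \<bullet> g + (1/a) * ((V *v (u1 - w)) \<bullet> g) = 0" by simp
  then have "g \<bullet> g = 0" unfolding g_def by (simp add: inner_add_left)
  then show ?thesis unfolding g_def by simp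
qed

lemma convex_grad_ineq:
  fixes f :: "real^'n \<Rightarrow> real"
  assumes cv: "convex_on UNIV f" and grad: "is_gradient f gf"
  shows "f y \<ge> f x + gf x \<bullet> (y - x)"
proof -
  define d where "d = y - x"
  define g where "g t = f (x + t *\<^sub>R d)" for t :: real
  have gc: "convex_on UNIV g"
  proof (rule convex_onI)
    fix t s u :: real assume u: "0 < u" "u < 1"
    have "x + ((1 - u) * s + u * t) *\<^sub>R d = (1 - u) *\<^sub>R (x + s *\<^sub>R d) + u *\<^sub>R (x + t *\<^sub>R d)"
      by (simp add: algebra_simps)
    then show "g ((1 - u) *\<^sub>R s + u *\<^sub>R t) \<le> (1 - u) * g s + u * g t"
      unfolding g_def using convex_onD[OF cv, of u "x + s *\<^sub>R d" "x + t *\<^sub>R d"] u by simp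
  qed simp
  have l: "((\<lambda>t::real. x + t *\<^sub>R d) has_derivative (\<lambda>t. t *\<^sub>R d)) (at 0)"
    by (auto intro!: derivative_eq_intros)
  have fd: "(f has_derivative (\<lambda>v. gf x \<bullet> v)) (at (x + 0 *\<^sub>R d))"
    using grad unfolding is_gradient_def by simp
  have "(g has_derivative (\<lambda>t. gf x \<bullet> (t *\<^sub>R d))) (at 0)"
    unfolding g_def using has_derivative_compose[OF l fd] by simp
  then have "(g has_field_derivative (gf x \<bullet> d)) (at 0 within UNIV)"
    by (rule has_derivative_imp_has_field_derivative) simp
  from convex_on_imp_above_tangent[OF gc connected_UNIV _ _ this, of 1]
  have "g 1 - g 0 \<ge> gf x \<bullet> d" by simp
  then show ?thesis unfolding g_def d_def by simp
qed

lemma convex_grad_mono: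
  fixes f :: "real^'n \<Rightarrow> real"
  assumes cv: "convex_on UNIV f" and grad: "is_gradient f gf"
  shows "(gf y - gf x) \<bullet> (y - x) \<ge> 0"
proof -
  have "f y \<ge> f x + gf x \<bullet> (y - x)" "f x \<ge> f y + gf y \<bullet> (x - y)"
    using convex_grad_ineq[OF cv grad] by blast+
  then show ?thesis by (simp add: inner_diff_left inner_diff_right algebra_simps)
qed

declare transpose_matrix_vector[simp del]

lemma energy_diff: assumes "spd M"
  shows "(M *v x1) \<bullet> x1 - (M *v (x1 - d)) \<bullet> (x1 - d) = 2 * ((M *v d) \<bullet> x1) - (M *v d) \<bullet> d"
  using spd_sym[OF assms, of x1 d]
  by (simp add: matrix_vector_mult_diff_distrib inner_diff_left inner_diff_right inner_commute)

lemma dual_bound: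
  fixes V :: "real^'m^'m" and Q :: "real^'n^'n" and B :: "real^'m^'n"
  assumes V: "spd V" and Q: "spd Q" and l: "l \<ge> 0"
    and ray: "\<forall>q. ((B ** matrix_inv V ** transpose B) *v q) \<bullet> q \<le> l * ((Q *v q) \<bullet> q)"
  shows "(matrix_inv Q *v (B *v w)) \<bullet> (B *v w) \<le> l * mnorm2 V w"
proof -
  define q where "q = matrix_inv Q *v (B *v w)"
  define z where "z = transpose B *v q"
  have Vi: "spd (matrix_inv V)" by (rule spd_inv_spd[OF V])
  have X: "(Q *v q) \<bullet> q = (matrix_inv Q *v (B *v w)) \<bullet> (B *v w)"
    unfolding q_def using spd_inv_mv(1)[OF Q] by (simp add: inner_commute)
  have X2: "(Q *v q) \<bullet> q = w \<bullet> z"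
    unfolding z_def using spd_inv_mv(1)[OF Q, of "B *v w"] unfolding q_def by (simp add: dot_mv)
  have Sq: "((B ** matrix_inv V ** transpose B) *v q) \<bullet> q = (matrix_inv V *v z) \<bullet> z"
    unfolding z_def by (simp add: dot_mv flip: matrix_vector_mul_assoc)
  have wz: "w \<bullet> z = (matrix_inv V *v z) \<bullet> (V *v w)"
    using spd_sym[OF Vi, of z "V *v w"] spd_inv_mv(2)[OF V, of w] by (simp add: inner_commute)
  show ?thesis
  proof (cases "l = 0")
    case True
    then have "(matrix_inv V *v z) \<bullet> z \<le> 0" using ray Sq spd_nonneg[OF Q, of q] by (metis mult_zero_left)
    then have "z = 0" using spd_pos[OF Vi, of z] by (cases "z = 0") auto
    then show ?thesis using X X2 True by simp
  next
    case False
    then have lp: "l > 0" using l by simp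
    have "w \<bullet> z \<le> ((matrix_inv V *v z) \<bullet> z) / (2*l) + l/2 * ((matrix_inv V *v (V *v w)) \<bullet> (V *v w))"
      using spd_young[OF Vi lp, of z "V *v w"] wz by simp
    also have "(matrix_inv V *v (V *v w)) \<bullet> (V *v w) = mnorm2 V w"
      unfolding mnorm2_def using spd_inv_mv(2)[OF V] by (simp add: inner_commute)
    also have "((matrix_inv V *v z) \<bullet> z) / (2*l) \<le> (l * ((Q *v q) \<bullet> q)) / (2*l)"
      using ray Sq lp by (metis divide_right_mono less_eq_real_def zero_less_mult_iff zero_less_numeral)
    also have "(l * ((Q *v q) \<bullet> q)) / (2*l) = ((Q *v q) \<bullet> q) / 2" using lp by simp
    finally have "(Q *v q) \<bullet> q \<le> ((Q *v q) \<bullet> q) / 2 + l/2 * mnorm2 V w" using X2 by simp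
    then show ?thesis using X by simp
  qed
qed

lemma young_corr:
  fixes Q :: "real^'n^'n"
  assumes Q: "spd Q" and K: "K \<ge> 0" and a: "a > 0" and D: "D \<ge> 0"
    and zb: "(matrix_inv Q *v z) \<bullet> z \<le> K * D"
  shows "a * (z \<bullet> y) \<le> D/2 + a^2 * K / 2 * ((Q *v y) \<bullet> y)"
proof -
  have Qi: "spd (matrix_inv Q)" by (rule spd_inv_spd[OF Q])
  have zy: "z \<bullet> y = (matrix_inv Q *v z) \<bullet> (Q *v y)"
    using spd_sym[OF Qi, of z "Q *v y"] spd_inv_mv(2)[OF Q, of y] by simp
  show ?thesis
  proof (cases "K = 0")
    case True
    then have "(matrix_inv Q *v z) \<bullet> z \<le> 0" using zb by simp
    then have "z = 0" using spd_pos[OF Qi, of z] by (cases "z = 0") auto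
    then show ?thesis using D True by simp
  next
    case False
    then have c: "a * K > 0" using K a by simp
    have h1: "z \<bullet> y \<le> ((matrix_inv Q *v z) \<bullet> z) / (2*(a*K)) + (a*K)/2 * ((matrix_inv Q *v (Q *v y)) \<bullet> (Q *v y))"
      using spd_young[OF Qi c, of z "Q *v y"] zy by simp
    have h2: "(matrix_inv Q *v (Q *v y)) \<bullet> (Q *v y) = (Q *v y) \<bullet> y"
      using spd_inv_mv(2)[OF Q] by (simp add: inner_commute)
    have h3: "((matrix_inv Q *v z) \<bullet> z) / (2*(a*K)) \<le> (K * D) / (2*(a*K))"
      by (rule divide_right_mono[OF zb]) (use c in simp)
    have h4: "(K * D) / (2*(a*K)) = D / (2*a)" using False by simp
    have "z \<bullet> y \<le> D / (2*a) + (a*K)/2 * ((Q *v y) \<bullet> y)" using h1[unfolded h2] h3 h4 by linarith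
    then have "a * (z \<bullet> y) \<le> a * (D / (2*a) + (a*K)/2 * ((Q *v y) \<bullet> y))" using a by simp
    also have "\<dots> = D/2 + a^2 * K / 2 * ((Q *v y) \<bullet> y)" using a by (simp add: field_simps power2_eq_square)
    finally show ?thesis .
  qed
qed

declare transpose_matrix_vector[simp del]

lemma mv_neg: "(A::real^'a^'b) *v (- x) = - (A *v x)"
  using matrix_vector_mult_diff_distrib[of A 0 x] by simp

lemma sum3_eq: fixes a b c :: "'a::ab_group_add" assumes "a + (b + c) = 0" shows "b = -(a + c)"
proof -
  have "b = (a + (b + c)) - (a + c)" by (simp add: algebra_simps)
  then show ?thesis using assms by simp
qed

theorem theorem4p3:
  fixes B :: "real^'m^'n"
    and f :: "real^'m \<Rightarrow> real" and gf :: "real^'m \<Rightarrow> real^'m"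
    and h :: "real^'n \<Rightarrow> real" and gh :: "real^'n \<Rightarrow> real^'n"
    and IV :: "real^'m^'m" and IQ :: "real^'n^'n"
    and ustar :: "real^'m" and pstar :: "real^'n"
    and u :: "nat \<Rightarrow> real^'m" and p :: "nat \<Rightarrow> real^'n" and \<alpha> :: "nat \<Rightarrow> real"
    and mu_f L_f mu_hB L_hB L_e :: real
  assumes mn: "CARD('n) \<le> CARD('m)"
    and rankB: "rank B = CARD('n)"
    and f_convex: "convex_on UNIV f" and f_grad: "is_gradient f gf"
    and gf_cont: "continuous_on UNIV gf" and gf_lip: "lipschitz_grad gf"
    and h_convex: "convex_on UNIV h" and h_grad: "is_gradient h gh"
    and gh_cont: "continuous_on UNIV gh" and gh_lip: "lipschitz_grad gh"
    and saddle1: "gf ustar + transpose B *v pstar = 0"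
    and saddle2: "B *v ustar = gh pstar"
    and IV_spd: "spd IV" and IQ_spd: "spd IQ"
    and f_S11: "S11 f gf mu_f L_f IV"
    and mu_f_pos: "0 < mu_f" and mu_f_le: "mu_f \<le> L_f" and L_f_lt: "L_f < 2"
    and e_lip: "\<forall>x y. mnorm IV ((x - matrix_inv IV *v gf x) - (y - matrix_inv IV *v gf y))
                        \<le> L_e * mnorm IV (x - y)"
    and mu_hB_pos: "0 < mu_hB"
    and hB_S11: "S11 (\<lambda>q. h q + 1/2 * (((B ** matrix_inv IV ** transpose B) *v q) \<bullet> q))
                     (\<lambda>q. gh q + (B ** matrix_inv IV ** transpose B) *v q) mu_hB L_hB IQ"
    and p_step: "\<forall>k. 0 < \<alpha> k \<longrightarrow> p (Suc k) = p k - \<alpha> k *\<^sub>R (matrix_inv IQ *v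
                   (gh (p k) - B *v (u k - matrix_inv IV *v (gf (u k) + transpose B *v p k))))"
    and u_step: "\<forall>k. 0 < \<alpha> k \<longrightarrow> (\<forall>v. f (u (Suc k)) + 1 / (2 * \<alpha> k) *
                   mnorm2 IV (u (Suc k) - u k + \<alpha> k *\<^sub>R (matrix_inv IV *v (transpose B *v p (Suc k))))
                 \<le> f v + 1 / (2 * \<alpha> k) *
                   mnorm2 IV (v - u k + \<alpha> k *\<^sub>R (matrix_inv IV *v (transpose B *v p (Suc k)))))"
  shows "let mu_V = mu_f;
             mu_Q = (2 - L_f) * mu_hB;
             L_S2 = lambda_max (matrix_inv IQ ** B ** matrix_inv IV ** transpose B);
             L_SQ2 = L_hB\<^sup>2 + L_e\<^sup>2 * L_S2;
             E = (\<lambda>k. 1/2 * mnorm2 IV (u k - ustar) + 1/2 * mnorm2 IQ (p k - pstar))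
         in (\<forall>k. 0 < \<alpha> k \<and> \<alpha> k < mu_Q / L_SQ2 \<longrightarrow>
                 E (Suc k) \<le> 1 / (1 + \<alpha> k * min mu_V (mu_Q - \<alpha> k * L_SQ2)) * E k)
          \<and> (\<forall>k. \<alpha> k = 0.5 * mu_Q / L_SQ2 \<longrightarrow>
                 E (Suc k) \<le> 1 / (1 + 0.5 * mu_Q * min mu_V (mu_Q / 2) / L_SQ2) * E k)"
proof -
  define Vi where "Vi = matrix_inv IV"
  define Qi where "Qi = matrix_inv IQ"
  define S where "S = B ** Vi ** transpose B"
  define L_S2 where "L_S2 = lambda_max (matrix_inv IQ ** B ** matrix_inv IV ** transpose B)"
  define mu_Q where "mu_Q = (2 - L_f) * mu_hB"
  define L_SQ2 where "L_SQ2 = L_hB\<^sup>2 + L_e\<^sup>2 * L_S2"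
  define E where "E = (\<lambda>k. 1/2 * mnorm2 IV (u k - ustar) + 1/2 * mnorm2 IQ (p k - pstar))"
  define ghB where "ghB = (\<lambda>q. gh q + (B ** matrix_inv IV ** transpose B) *v q)"
  define e where "e = (\<lambda>x. x - matrix_inv IV *v gf x)"
  have Vi_spd: "spd Vi" unfolding Vi_def by (rule spd_inv_spd[OF IV_spd])
  have Qi_spd: "spd Qi" unfolding Qi_def by (rule spd_inv_spd[OF IQ_spd])
  have Lf_pos: "0 < L_f" using mu_f_pos mu_f_le by linarith
  define z :: "real^'n" where "z = axis undefined 1"
  have z: "z \<noteq> 0" unfolding z_def by (simp add: axis_eq_0_iff)
  have zpos: "0 < mnorm2 IQ z" using IQ_spd z unfolding spd_def by blast
  have LhB_pos: "0 < L_hB"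
  proof -
    have "mu_hB/2 * mnorm2 IQ (z - 0) \<le> L_hB/2 * mnorm2 IQ (z - 0)"
      using hB_S11 unfolding S11_def by (meson order_trans)
    then have "mu_hB \<le> L_hB" using zpos by simp
    then show ?thesis using mu_hB_pos by linarith
  qed
  have Ssym: "transpose S = S"
    unfolding S_def Vi_def using spd_inv_transpose[OF IV_spd]
    by (simp add: matrix_transpose_mul matrix_mul_assoc)
  have matA: "matrix_inv IQ ** B ** matrix_inv IV ** transpose B = Qi ** S"
    by (simp add: Qi_def S_def Vi_def matrix_mul_assoc)
  have ray: "\<forall>q. (S *v q) \<bullet> q \<le> L_S2 * ((IQ *v q) \<bullet> q)"
    using lambda_max_bound[OF IQ_spd Ssym] unfolding L_S2_def matA Qi_def by blast
  have Sq: "(S *v q) \<bullet> q = (Vi *v (transpose B *v q)) \<bullet> (transpose B *v q)" for q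
    unfolding S_def by (simp add: dot_mv flip: matrix_vector_mul_assoc)
  have Snn: "0 \<le> (S *v q) \<bullet> q" for q unfolding Sq by (rule spd_nonneg[OF Vi_spd])
  have LS2_nn: "0 \<le> L_S2"
  proof -
    have "0 \<le> L_S2 * mnorm2 IQ z" using ray Snn[of z] unfolding mnorm2_def by (meson order_trans)
    then show ?thesis using zpos by (simp add: zero_le_mult_iff)
  qed
  have LSQ2_pos: "0 < L_SQ2" unfolding L_SQ2_def using LhB_pos LS2_nn by (simp add: add_pos_nonneg)
  have muQ_pos: "0 < mu_Q" unfolding mu_Q_def using L_f_lt mu_hB_pos by simp
  have dualB: "(Qi *v (B *v w)) \<bullet> (B *v w) \<le> L_S2 * mnorm2 IV w" for w
    unfolding Qi_def by (rule dual_bound[OF IV_spd IQ_spd LS2_nn]) (use ray in \<open>simp add: S_def Vi_def\<close>)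
  have e_sq: "mnorm2 IV (e x - e y) \<le> L_e^2 * mnorm2 IV (x - y)" for x y
  proof -
    have A: "0 \<le> mnorm2 IV (e x - e y)" "0 \<le> mnorm2 IV (x - y)"
      using spd_nonneg[OF IV_spd] unfolding mnorm2_def by auto
    have "sqrt (mnorm2 IV (e x - e y)) \<le> L_e * sqrt (mnorm2 IV (x - y))"
      using e_lip unfolding mnorm_def e_def by blast
    then have "(sqrt (mnorm2 IV (e x - e y)))^2 \<le> (L_e * sqrt (mnorm2 IV (x - y)))^2"
      using A by (intro power_mono) auto
    then show ?thesis using A by (simp add: power_mult_distrib)
  qed
  have main: "E (Suc k) \<le> 1 / (1 + \<alpha> k * min mu_f (mu_Q - \<alpha> k * L_SQ2)) * E k"
    if ak: "0 < \<alpha> k" "\<alpha> k < mu_Q / L_SQ2" for k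
  proof -
    define a where "a = \<alpha> k"
    have a_pos: "0 < a" using ak unfolding a_def by simp
    define u0 where "u0 = u k"
    define u1 where "u1 = u (Suc k)"
    define p0 where "p0 = p k"
    define p1 where "p1 = p (Suc k)"
    define x1 where "x1 = u1 - ustar"
    define y1 where "y1 = p1 - pstar"
    define dx where "dx = u1 - u0"
    define dy where "dy = p1 - p0"
    define bt where "bt = transpose B *v y1"
    define Df where "Df = gf u1 - gf ustar"
    define G where "G = (\<lambda>q v. gh q - B *v (v - Vi *v (gf v + transpose B *v q)))"
    have foc0: "gf u1 + (1/a) *\<^sub>R (IV *v (u1 - (u0 - a *\<^sub>R (Vi *v (transpose B *v p1))))) = 0"
    proof (rule argmin_foc[OF f_grad IV_spd a_pos])
      have eqv: "\<And>v. v - (u0 - a *\<^sub>R (Vi *v (transpose B *v p1))) = v - u0 + a *\<^sub>R (Vi *v (transpose B *v p1))"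
        by (simp add: algebra_simps)
      then show "\<forall>v. f u1 + 1 / (2 * a) * mnorm2 IV (u1 - (u0 - a *\<^sub>R (Vi *v (transpose B *v p1))))
          \<le> f v + 1 / (2 * a) * mnorm2 IV (v - (u0 - a *\<^sub>R (Vi *v (transpose B *v p1))))"
        unfolding eqv unfolding a_def u0_def u1_def p1_def Vi_def using u_step ak(1) by blast
    qed
    have E1: "IV *v (u1 - (u0 - a *\<^sub>R (Vi *v (transpose B *v p1)))) = IV *v dx + a *\<^sub>R (transpose B *v p1)"
      unfolding dx_def Vi_def
      by (simp add: matrix_vector_mult_diff_distrib matrix_vector_right_distrib matrix_vector_mult_scaleR spd_inv_mv(1)[OF IV_spd] algebra_simps)
    have h: "gf u1 + ((1/a) *\<^sub>R (IV *v dx) + transpose B *v p1) = 0"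
    proof -
      have "(1/a) *\<^sub>R (IV *v dx + a *\<^sub>R (transpose B *v p1)) = (1/a) *\<^sub>R (IV *v dx) + transpose B *v p1"
        using a_pos by (simp only: scaleR_add_right scaleR_scaleR) simp
      then show ?thesis using foc0 unfolding E1 by simp
    qed
    then have "(1/a) *\<^sub>R (IV *v dx) = - (gf u1 + transpose B *v p1)"
      by (rule sum3_eq)
    then have "a *\<^sub>R ((1/a) *\<^sub>R (IV *v dx)) = a *\<^sub>R (- (gf u1 + transpose B *v p1))" by simp
    then have "IV *v dx = - a *\<^sub>R (gf u1 + transpose B *v p1)" using a_pos by (simp add: algebra_simps)
    moreover have "gf u1 + transpose B *v p1 = Df + bt"
    proof -
      have "transpose B *v p1 = bt + transpose B *v pstar"
        unfolding bt_def y1_def by (simp add: matrix_vector_mult_diff_distrib)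
      moreover have "gf ustar = - (transpose B *v pstar)" using saddle1 by (simp add: eq_neg_iff_add_eq_0)
      ultimately show ?thesis unfolding Df_def by simp
    qed
    ultimately have foc: "IV *v dx = - a *\<^sub>R (Df + bt)" by simp
    have pst: "IQ *v dy = - a *\<^sub>R G p0 u0"
    proof -
      have "dy = - a *\<^sub>R (Qi *v G p0 u0)"
        using p_step ak(1) unfolding dy_def a_def p0_def p1_def u0_def G_def Qi_def Vi_def by simp
      then show ?thesis unfolding Qi_def by (simp add: mv_neg matrix_vector_mult_scaleR spd_inv_mv(1)[OF IQ_spd])
    qed
    have Gform: "G q v = ghB q - B *v e v" for q v
    proof -
      have "B *v (v - Vi *v (gf v + transpose B *v q)) = B *v e v - S *v q"
        unfolding e_def S_def Vi_def
        by (simp add: matrix_vector_mult_diff_distrib matrix_vector_right_distrib matrix_vector_mul_assoc matrix_mul_assoc)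
      then show ?thesis unfolding G_def ghB_def S_def Vi_def by simp
    qed
    have Gstar: "G pstar ustar = 0"
      unfolding G_def using saddle1 saddle2 by simp
    define w where "w = e u1 - e u0"
    define Dh where "Dh = ghB p1 - ghB p0"
    define Ex1 where "Ex1 = mnorm2 IV x1"
    define Ey1 where "Ey1 = mnorm2 IQ y1"
    define Dx where "Dx = mnorm2 IV dx"
    define Dy where "Dy = mnorm2 IQ dy"
    define A1 where "A1 = Df \<bullet> x1"
    define HB where "HB = (ghB p1 - ghB pstar) \<bullet> y1"
    define Hh where "Hh = (gh p1 - gh pstar) \<bullet> y1"
    define C where "C = (Vi *v Df) \<bullet> bt"
    define P where "P = (Vi *v Df) \<bullet> Df"
    define Sy where "Sy = (Vi *v bt) \<bullet> bt"
    define btx where "btx = bt \<bullet> x1"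
    define G1y where "G1y = G p1 u1 \<bullet> y1"
    have eU: "mnorm2 IV x1 - mnorm2 IV (u0 - ustar) = 2*((IV *v dx) \<bullet> x1) - Dx"
    proof -
      have "u0 - ustar = x1 - dx" unfolding x1_def dx_def by simp
      then show ?thesis using energy_diff[OF IV_spd, of x1 dx] unfolding mnorm2_def Dx_def by simp
    qed
    have eP: "mnorm2 IQ y1 - mnorm2 IQ (p0 - pstar) = 2*((IQ *v dy) \<bullet> y1) - Dy"
    proof -
      have "p0 - pstar = y1 - dy" unfolding y1_def dy_def by simp
      then show ?thesis using energy_diff[OF IQ_spd, of y1 dy] unfolding mnorm2_def Dy_def by simp
    qed
    have Ek: "E k = 1/2 * mnorm2 IV (u0 - ustar) + 1/2 * mnorm2 IQ (p0 - pstar)"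
      unfolding E_def u0_def p0_def by simp
    have Ek1: "E (Suc k) = 1/2 * Ex1 + 1/2 * Ey1"
      unfolding E_def Ex1_def Ey1_def x1_def y1_def u1_def p1_def by simp
    have T1: "(IV *v dx) \<bullet> x1 = -(a*A1) - a*btx"
      unfolding foc A1_def btx_def by (simp add: inner_add_left algebra_simps)
    have G0: "G p0 u0 = G p1 u1 - Dh + B *v w"
      unfolding Gform Dh_def w_def by (simp add: matrix_vector_mult_diff_distrib algebra_simps)
    have T2: "(IQ *v dy) \<bullet> y1 = -(a*G1y) + a*(Dh \<bullet> y1) + a*((-(B *v w)) \<bullet> y1)"
      unfolding pst G0 G1y_def by (simp add: inner_add_left inner_diff_left algebra_simps)
    have eDf: "e u1 - e ustar = x1 - Vi *v Df"
      unfolding e_def x1_def Df_def Vi_def by (simp add: matrix_vector_mult_diff_distrib algebra_simps)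
    have T3: "G1y = HB - btx + C"
    proof -
      have g0: "ghB pstar - B *v e ustar = 0" using Gstar unfolding Gform .
      have g1: "G p1 u1 = (ghB p1 - ghB pstar) - (B *v e u1 - B *v e ustar)"
        unfolding Gform using g0 by (simp add: algebra_simps)
      have g2: "B *v e u1 - B *v e ustar = B *v x1 - B *v (Vi *v Df)"
        by (simp only: matrix_vector_mult_diff_distrib[symmetric] eDf)
      have "G1y = HB - (B *v x1) \<bullet> y1 + (B *v (Vi *v Df)) \<bullet> y1"
        unfolding G1y_def HB_def g1 g2 by (simp add: inner_diff_left)
      moreover have "(B *v x1) \<bullet> y1 = btx" unfolding btx_def bt_def by (metis dot_mv inner_commute)
      moreover have "(B *v (Vi *v Df)) \<bullet> y1 = C" unfolding C_def bt_def by (simp add: dot_mv)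
      ultimately show ?thesis by simp
    qed
    have aT3: "a*G1y = a*HB - a*btx + a*C" unfolding T3 by (simp add: algebra_simps)
    have diffE: "E (Suc k) - E k = -(a*A1) - a*HB - a*C + a*(Dh \<bullet> y1) + a*((-(B *v w)) \<bullet> y1) - Dx/2 - Dy/2"
      using eU eP Ek Ek1 T1 T2 aT3 unfolding Ex1_def Ey1_def by linarith
    have F1: "mu_f * Ex1 \<le> A1"
      using S11_mono[OF f_S11, of u1 ustar] unfolding Ex1_def A1_def x1_def Df_def .
    have F2: "1/L_f * P \<le> A1"
      using S11_cocoercive[OF f_S11 IV_spd _ Lf_pos, of u1 ustar] mu_f_pos
      unfolding P_def A1_def x1_def Df_def Vi_def by simp
    have F3: "-(P/(2*L_f)) - L_f/2 * Sy \<le> C"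
    proof -
      have "(Vi *v Df) \<bullet> (- bt) \<le> ((Vi *v Df) \<bullet> Df) / (2*L_f) + L_f/2 * ((Vi *v (- bt)) \<bullet> (- bt))"
        by (rule spd_young[OF Vi_spd Lf_pos])
      then show ?thesis unfolding C_def P_def Sy_def by (simp add: mv_neg)
    qed
    have Sy_eq: "(S *v y1) \<bullet> y1 = Sy" unfolding Sy_def bt_def by (rule Sq)
    have H1: "0 \<le> Hh" unfolding Hh_def y1_def by (rule convex_grad_mono[OF h_convex h_grad])
    have H2: "mu_hB * Ey1 \<le> HB"
      using S11_mono[OF hB_S11, of p1 pstar] unfolding Ey1_def HB_def y1_def ghB_def .
    have H3: "HB = Hh + Sy"
    proof -
      have "ghB p1 - ghB pstar = (gh p1 - gh pstar) + S *v y1"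
        unfolding ghB_def S_def Vi_def y1_def by (simp add: matrix_vector_mult_diff_distrib algebra_simps)
      then show ?thesis unfolding HB_def Hh_def using Sy_eq by (simp add: inner_add_left)
    qed
    have Y1: "a * (Dh \<bullet> y1) \<le> Dy/2 + a^2 * L_hB^2 / 2 * Ey1"
    proof -
      have zb: "(matrix_inv IQ *v Dh) \<bullet> Dh \<le> L_hB^2 * Dy"
        using S11_lip[OF hB_S11 IQ_spd _ LhB_pos, of p1 p0] mu_hB_pos
        unfolding Dh_def Dy_def dy_def ghB_def by simp
      have "0 \<le> Dy" unfolding Dy_def mnorm2_def by (rule spd_nonneg[OF IQ_spd])
      from young_corr[OF IQ_spd _ a_pos this zb, of y1] show ?thesis unfolding Ey1_def mnorm2_def by simp
    qed
    have Y2: "a * ((-(B *v w)) \<bullet> y1) \<le> Dx/2 + a^2 * (L_e^2 * L_S2) / 2 * Ey1"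
    proof -
      have "(matrix_inv IQ *v (B *v w)) \<bullet> (B *v w) \<le> L_S2 * mnorm2 IV w"
        using dualB[of w] unfolding Qi_def .
      also have "\<dots> \<le> L_S2 * (L_e^2 * Dx)"
        using e_sq[of u1 u0] LS2_nn unfolding w_def Dx_def dx_def by (simp add: mult_left_mono)
      finally have zb: "(matrix_inv IQ *v (- (B *v w))) \<bullet> (- (B *v w)) \<le> (L_e^2 * L_S2) * Dx"
        by (simp add: mv_neg algebra_simps)
      have "0 \<le> Dx" unfolding Dx_def mnorm2_def by (rule spd_nonneg[OF IV_spd])
      from young_corr[OF IQ_spd _ a_pos this zb, of y1] LS2_nn show ?thesis unfolding Ey1_def mnorm2_def by simp
    qed
    have i1: "mu_f/2 * Ex1 - L_f/2 * Sy \<le> A1 + C"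
    proof -
      have "P/(2*L_f) \<le> A1/2" using divide_right_mono[OF F2, of 2] by simp
      moreover have "mu_f/2 * Ex1 \<le> A1/2" using divide_right_mono[OF F1, of 2] by simp
      ultimately show ?thesis using F3 by linarith
    qed
    have i2: "mu_Q/2 * Ey1 + L_f/2 * Sy \<le> HB"
    proof -
      have t: "0 \<le> 1 - L_f/2" using L_f_lt by simp
      have "(1 - L_f/2) * (mu_hB * Ey1) \<le> (1 - L_f/2) * HB" by (rule mult_left_mono[OF H2 t])
      moreover have "0 \<le> L_f/2 * Hh" using Lf_pos H1 by simp
      moreover have "(1 - L_f/2)*HB + L_f/2*Hh + L_f/2*Sy = HB" using H3 by (simp add: algebra_simps)
      moreover have "mu_Q/2 * Ey1 = (1 - L_f/2) * (mu_hB * Ey1)" unfolding mu_Q_def by (simp add: field_simps)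
      ultimately show ?thesis by linarith
    qed
    have aT: "a * (mu_f/2 * Ex1 + mu_Q/2 * Ey1) \<le> a*A1 + a*HB + a*C"
    proof -
      have "a * (mu_f/2 * Ex1 + mu_Q/2 * Ey1) \<le> a * (A1 + HB + C)"
        using i1 i2 a_pos by (intro mult_left_mono) auto
      then show ?thesis by (simp add: algebra_simps)
    qed
    have ring1: "a * (mu_f/2 * Ex1 + mu_Q/2 * Ey1) - a^2 * L_hB^2 / 2 * Ey1 - a^2 * (L_e^2 * L_S2) / 2 * Ey1
        = a*mu_f/2*Ex1 + a*(mu_Q - a*L_SQ2)/2*Ey1"
      unfolding L_SQ2_def by (simp add: field_simps power2_eq_square)
    have fin1: "E (Suc k) - E k \<le> -(a*mu_f/2*Ex1) - a*(mu_Q - a*L_SQ2)/2*Ey1"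
      using diffE aT Y1 Y2 ring1 by linarith
    define mu where "mu = min mu_f (mu_Q - a * L_SQ2)"
    have mu_pos: "0 < mu"
    proof -
      have "a * L_SQ2 < mu_Q" using ak(2) LSQ2_pos unfolding a_def by (simp add: pos_less_divide_eq)
      then show ?thesis unfolding mu_def using mu_f_pos by simp
    qed
    have Ex1_nn: "0 \<le> Ex1" unfolding Ex1_def mnorm2_def by (rule spd_nonneg[OF IV_spd])
    have Ey1_nn: "0 \<le> Ey1" unfolding Ey1_def mnorm2_def by (rule spd_nonneg[OF IQ_spd])
    have m1: "a*mu/2*Ex1 \<le> a*mu_f/2*Ex1"
      using Ex1_nn a_pos unfolding mu_def by (intro mult_right_mono) (auto simp: divide_right_mono)
    have m2: "a*mu/2*Ey1 \<le> a*(mu_Q - a*L_SQ2)/2*Ey1"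
      using Ey1_nn a_pos unfolding mu_def by (intro mult_right_mono) (auto simp: divide_right_mono)
    have "E (Suc k) * (1 + a*mu) = E (Suc k) + a*mu/2*Ex1 + a*mu/2*Ey1"
      unfolding Ek1 by (simp add: field_simps)
    then have "E (Suc k) * (1 + a*mu) \<le> E k" using fin1 m1 m2 by linarith
    moreover have "0 < 1 + a*mu" using a_pos mu_pos by (simp add: add_pos_pos)
    ultimately have "E (Suc k) \<le> E k / (1 + a*mu)" by (simp add: pos_le_divide_eq)
    then show ?thesis unfolding mu_def a_def by simp
  qed
  have second: "E (Suc k) \<le> 1 / (1 + 0.5 * mu_Q * min mu_f (mu_Q / 2) / L_SQ2) * E k"
    if ak: "\<alpha> k = 0.5 * mu_Q / L_SQ2" for k
  proof -
    have a1: "0 < \<alpha> k" using ak muQ_pos LSQ2_pos by simp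
    have a2: "\<alpha> k < mu_Q / L_SQ2" using ak muQ_pos LSQ2_pos by (simp add: field_simps)
    have eq1: "mu_Q - \<alpha> k * L_SQ2 = mu_Q / 2" using ak LSQ2_pos by simp
    have eq2: "\<alpha> k * min mu_f (mu_Q / 2) = 0.5 * mu_Q * min mu_f (mu_Q / 2) / L_SQ2" using ak by simp
    show ?thesis using main[OF a1 a2] unfolding eq1 eq2 .
  qed
  show ?thesis
    using main second unfolding Let_def E_def mu_Q_def L_SQ2_def L_S2_def by blast
qed

end
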